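(* \[ \sum_{n=1}^\infty\frac{p(n)}{n^3(3n-2)^2(3n-1)^2(2n-1)\binom{5n}{3n}^2\binom{2n}{n}}=3\pi^2, \] where $p(n)=574277n^6-1347180n^5+1274841n^4-621294n^3+164024n^2-22184n+1200$. *)

theory Defs
  imports Complex_Main
begin

definition p15 :: "real \<Rightarrow> real" where
  "p15 n = 574277*n^6 - 1347180*n^5 + 1274841*n^4 - 621294*n^3 + 164024*n^2 - 22184*n + 1200"

definition term15 :: "nat \<Rightarrow> real" where
  "term15 n = p15 (real n) /
     (real n ^ 3 * (3 * real n - 2)^2 * (3 * real n - 1)^2 * (2 * real n - 1)
      * real ((5*n) choose (3*n))^2 * real ((2*n) choose n))"

end

theory Submission
  imports Defs "HOL-Analysis.Analysis"
begin
definition q0 :: "real \<Rightarrow> real" where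
  "q0 x = (-568416) + (-11900224) * x^1 + (-111776872) * x^2 + (-624017016) * x^3 + (-2309534840) * x^4 + (-5977303032) * x^5 + (-11104013896) * x^6 + (-14931970088) * x^7 + (-14437002632) * x^8 + (-9794271144) * x^9 + (-4428328432) * x^10 + (-1198778496) * x^11 + (-147014912) * x^12"

definition q1 :: "real \<Rightarrow> real" where
  "q1 x = (-1651352) + (-31112160) * x^1 + (-261279122) * x^2 + (-1292877084) * x^3 + (-4193373926) * x^4 + (-9370363040) * x^5 + (-14733159326) * x^6 + (-16312615372) * x^7 + (-12473019122) * x^8 + (-6276645400) * x^9 + (-1871920352) * x^10 + (-250790144) * x^11"

definition q2 :: "real \<Rightarrow> real" where
  "q2 x = (-2093132) + (-35178686) * x^1 + (-261345551) * x^2 + (-1131380970) * x^3 + (-3163577241) * x^4 + (-5975267578) * x^5 + (-7726158433) * x^6 + (-6757670790) * x^7 + (-3828716267) * x^8 + (-1269601656) * x^9 + (-187209056) * x^10"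

definition q3 :: "real \<Rightarrow> real" where
  "q3 x = (-1497872) + (-22261155) * x^1 + (-144617810) * x^2 + (-539440790) * x^3 + (-1274183806) * x^4 + (-1977776255) * x^5 + (-2018613830) * x^6 + (-1307135480) * x^7 + (-487549082) * x^8 + (-79848720) * x^9"

definition q4 :: "real \<Rightarrow> real" where
  "q4 x = (-659156) + (-8575530) * x^1 + (-48030075) * x^2 + (-151365970) * x^3 + (-293768643) * x^4 + (-359754850) * x^5 + (-271628125) * x^6 + (-115668730) * x^7 + (-21279081) * x^8"

definition q5 :: "real \<Rightarrow> real" where
  "q5 x = (-182300) + (-2050250) * x^1 + (-9717190) * x^2 + (-25179665) * x^3 + (-38553550) * x^4 + (-34901825) * x^5 + (-17306360) * x^6 + (-3627660) * x^7"

definition q6 :: "real \<Rightarrow> real" where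
  "q6 x = (-30920) + (-295750) * x^1 + (-1155735) * x^2 + (-2365090) * x^3 + (-2675715) * x^4 + (-1587880) * x^5 + (-386350) * x^6"

definition q7 :: "real \<Rightarrow> real" where
  "q7 x = (-2940) + (-23395) * x^1 + (-72510) * x^2 + (-109705) * x^3 + (-81150) * x^4 + (-23500) * x^5"

definition q8 :: "real \<Rightarrow> real" where
  "q8 x = (-120) + (-770) * x^1 + (-1775) * x^2 + (-1750) * x^3 + (-625) * x^4"

definition Qs :: "real \<Rightarrow> real \<Rightarrow> real" where
  "Qs x y = q0 x * y^0 + q1 x * y^1 + q2 x * y^2 + q3 x * y^3 + q4 x * y^4 + q5 x * y^5 + q6 x * y^6 + q7 x * y^7 + q8 x * y^8"
lemma poly_id:
  fixes x y :: real
  shows "(5*x+1)*(5*x+2)*(5*x+3)*(5*x+4)*(5*x+5) *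
    ((y+4*x+2)*(y+4*x+3)*(y+4*x+4)*(y+4*x+5)*(y+5*x+2)*(y+5*x+3)*(y+5*x+4)*(y+5*x+5)*(y+5*x+6))
   - (3*x+1)*(3*x+2)*(3*x+3)*(2*x+1)*(2*x+2)*(x+1)*(4*x+1)*(4*x+2)*(4*x+3)*(4*x+4)
     * ((y+x+1)*(y+3*x+1)*(y+3*x+2)*(y+3*x+3))
   = Qs x (y+1)*(y+x+1)*(y+3*x+1) - Qs x y*(y+4*x+5)*(y+5*x+6)"
  unfolding Qs_def q0_def q1_def q2_def q3_def q4_def q5_def q6_def q7_def q8_def
  by algebra

lemma poly_id2:
  fixes x :: real
  shows "- Qs x 0 = p15 (x+1) * (x+1)^2 * (4*x+1)*(4*x+2)*(4*x+3)*(4*x+4)"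
  unfolding Qs_def apply simp
  unfolding q0_def p15_def by algebra

lemma fact_p1: "fact (m+1) = (real m+1) * (fact m :: real)" by simp
lemma fact_p2: "fact (m+2) = (real m+1)*(real m+2)*(fact m::real)"
  by (simp add: numeral_eq_Suc algebra_simps)
lemma fact_p3: "fact (m+3) = (real m+1)*(real m+2)*(real m+3)*(fact m::real)"
  by (simp add: numeral_eq_Suc algebra_simps)
lemma fact_p4: "fact (m+4) = (real m+1)*(real m+2)*(real m+3)*(real m+4)*(fact m::real)"
  by (simp add: numeral_eq_Suc algebra_simps)
lemma fact_p5: "fact (m+5) = (real m+1)*(real m+2)*(real m+3)*(real m+4)*(real m+5)*(fact m::real)"
  by (simp add: numeral_eq_Suc algebra_simps)

lemma frac4: "((a::real)*A)*(b*B)/((c*C)*(d*D)) = A*B/(C*D) * ((a*b)/(c*d))"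
  by (simp add: mult_ac)
lemma frac5: "18*((a::real)*A)*(b*B)*(c*C)*(d*D)/(e*E) = 18*A*B*C*D/E * ((a*b*c*d)/e)"
  by (simp add: mult_ac)

definition UU :: "nat \<Rightarrow> real" where
  "UU n = 18 * fact (3*n) * fact (2*n) * fact n * fact (4*n) / fact (5*n)"
definition KK :: "nat \<Rightarrow> nat \<Rightarrow> real" where
  "KK n k = fact (k+n) * fact (k+3*n) / (fact (k+4*n+1) * fact (k+5*n+1))"
definition FF :: "nat \<Rightarrow> nat \<Rightarrow> real" where "FF n k = UU n * KK n k"
definition GG :: "nat \<Rightarrow> nat \<Rightarrow> real" where
  "GG n k = 18 * fact (3*n) * fact (2*n) * fact n * fact (4*n) / fact (5*n+5) * Qs (real n) (real k)
     * (fact (k+n) * fact (k+3*n) / (fact (k+4*n+4) * fact (k+5*n+5)))"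

lemma KK_k: "KK n (k+1) = KK n k * ((real k + real n + 1) * (real k + 3*real n + 1)
   / ((real k + 4*real n + 2) * (real k + 5*real n + 2)))"
proof -
  have e1: "fact (k+1+n) = (real k + real n + 1) * (fact (k+n) :: real)"
    using fact_p1[of "k+n"] by (simp add: algebra_simps)
  have e2: "fact (k+1+3*n) = (real k + 3*real n + 1) * (fact (k+3*n) :: real)"
    using fact_p1[of "k+3*n"] by (simp add: algebra_simps)
  have e3: "fact (k+1+4*n+1) = (real k + 4*real n + 2) * (fact (k+4*n+1) :: real)"
    using fact_p1[of "k+4*n+1"] by (simp add: algebra_simps)
  have e4: "fact (k+1+5*n+1) = (real k + 5*real n + 2) * (fact (k+5*n+1) :: real)"
    using fact_p1[of "k+5*n+1"] by (simp add: algebra_simps)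
  show ?thesis unfolding KK_def e1 e2 e3 e4 frac4 ..
qed

lemma KK_n: "KK (n+1) k = KK n k * (((real k + real n + 1) * ((real k + 3*real n + 1)
   * (real k + 3*real n + 2) * (real k + 3*real n + 3)))
   / (((real k + 4*real n + 2) * (real k + 4*real n + 3) * (real k + 4*real n + 4) * (real k + 4*real n + 5))
     * ((real k + 5*real n + 2) * (real k + 5*real n + 3) * (real k + 5*real n + 4) * (real k + 5*real n + 5)
     * (real k + 5*real n + 6))))"
proof -
  have e1: "fact (k+(n+1)) = (real k + real n + 1) * (fact (k+n) :: real)"
    using fact_p1[of "k+n"] by (simp add: algebra_simps)
  have e2: "fact (k+3*(n+1)) = (real k + 3*real n + 1) * (real k + 3*real n + 2) * (real k + 3*real n + 3) * (fact (k+3*n) :: real)"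
    using fact_p3[of "k+3*n"] by (simp add: algebra_simps)
  have e3: "fact (k+4*(n+1)+1) = (real k + 4*real n + 2) * (real k + 4*real n + 3) * (real k + 4*real n + 4) * (real k + 4*real n + 5) * (fact (k+4*n+1) :: real)"
    using fact_p4[of "k+4*n+1"] by (simp add: algebra_simps)
  have e4: "fact (k+5*(n+1)+1) = (real k + 5*real n + 2) * (real k + 5*real n + 3) * (real k + 5*real n + 4) * (real k + 5*real n + 5) * (real k + 5*real n + 6) * (fact (k+5*n+1) :: real)"
    using fact_p5[of "k+5*n+1"] by (simp add: algebra_simps)
  show ?thesis unfolding KK_def e1 e2 e3 e4 frac4 ..
qed

lemma UU_n: "UU (n+1) = UU n * (((3*real n+1)*(3*real n+2)*(3*real n+3))*((2*real n+1)*(2*real n+2))*(real n+1)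
   *((4*real n+1)*(4*real n+2)*(4*real n+3)*(4*real n+4))
   / ((5*real n+1)*(5*real n+2)*(5*real n+3)*(5*real n+4)*(5*real n+5)))"
proof -
  have e1: "fact (3*(n+1)) = (3*real n+1)*(3*real n+2)*(3*real n+3) * (fact (3*n) :: real)"
    using fact_p3[of "3*n"] by (simp add: algebra_simps)
  have e2: "fact (2*(n+1)) = (2*real n+1)*(2*real n+2) * (fact (2*n) :: real)"
    using fact_p2[of "2*n"] by (simp add: algebra_simps)
  have e3: "fact (n+1) = (real n+1) * (fact n :: real)"
    using fact_p1[of "n"] by (simp add: algebra_simps)
  have e4: "fact (4*(n+1)) = (4*real n+1)*(4*real n+2)*(4*real n+3)*(4*real n+4) * (fact (4*n) :: real)"
    using fact_p4[of "4*n"] by (simp add: algebra_simps)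
  have e5: "fact (5*(n+1)) = (5*real n+1)*(5*real n+2)*(5*real n+3)*(5*real n+4)*(5*real n+5) * (fact (5*n) :: real)"
    using fact_p5[of "5*n"] by (simp add: algebra_simps)
  show ?thesis unfolding UU_def e1 e2 e3 e4 e5 frac5 ..
qed
lemma wz_rat:
  fixes x y a b :: real
  assumes x: "x \<ge> 0" and y: "y \<ge> 0"
  and h: "(5*x+1)*(5*x+2)*(5*x+3)*(5*x+4)*(5*x+5) *
    ((y+4*x+2)*(y+4*x+3)*(y+4*x+4)*(y+4*x+5)*(y+5*x+2)*(y+5*x+3)*(y+5*x+4)*(y+5*x+5)*(y+5*x+6))
   - (3*x+1)*(3*x+2)*(3*x+3)*(2*x+1)*(2*x+2)*(x+1)*(4*x+1)*(4*x+2)*(4*x+3)*(4*x+4)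
     * ((y+x+1)*(y+3*x+1)*(y+3*x+2)*(y+3*x+3))
   = a*(y+x+1)*(y+3*x+1) - b*(y+4*x+5)*(y+5*x+6)"
  shows "1 - (((3*x+1)*(3*x+2)*(3*x+3))*((2*x+1)*(2*x+2))*(x+1)
   *((4*x+1)*(4*x+2)*(4*x+3)*(4*x+4))
   / ((5*x+1)*(5*x+2)*(5*x+3)*(5*x+4)*(5*x+5)))
   * (((y + x + 1) * ((y + 3*x + 1) * (y + 3*x + 2) * (y + 3*x + 3)))
   / (((y + 4*x + 2) * (y + 4*x + 3) * (y + 4*x + 4) * (y + 4*x + 5))
     * ((y + 5*x + 2) * (y + 5*x + 3) * (y + 5*x + 4) * (y + 5*x + 5) * (y + 5*x + 6))))
  = ((y + x + 1) * (y + 3*x + 1) / ((y + 4*x + 2) * (y + 5*x + 2)))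
     * (a / ((5*x+1)*(5*x+2)*(5*x+3)*(5*x+4)*(5*x+5) * ((y+4*x+3)*(y+4*x+4)*(y+4*x+5)*(y+5*x+3)*(y+5*x+4)*(y+5*x+5)*(y+5*x+6))))
   - b / ((5*x+1)*(5*x+2)*(5*x+3)*(5*x+4)*(5*x+5) * ((y+4*x+2)*(y+4*x+3)*(y+4*x+4)*(y+5*x+2)*(y+5*x+3)*(y+5*x+4)*(y+5*x+5)))"
proof -
  define P5 where "P5 = (5*x+1)*(5*x+2)*(5*x+3)*(5*x+4)*(5*x+5)"
  define Nl where "Nl = ((3*x+1)*(3*x+2)*(3*x+3))*((2*x+1)*(2*x+2))*(x+1)*((4*x+1)*(4*x+2)*(4*x+3)*(4*x+4))"
  define M where "M = (y + x + 1) * ((y + 3*x + 1) * (y + 3*x + 2) * (y + 3*x + 3))"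
  define D4 where "D4 = (y + 4*x + 2) * (y + 4*x + 3) * (y + 4*x + 4) * (y + 4*x + 5)"
  define D5 where "D5 = (y + 5*x + 2) * (y + 5*x + 3) * (y + 5*x + 4) * (y + 5*x + 5) * (y + 5*x + 6)"
  define m where "m = (y + x + 1) * (y + 3*x + 1)"
  define d2 where "d2 = (y + 4*x + 2) * (y + 5*x + 2)"
  define E1 where "E1 = (y+4*x+3)*(y+4*x+4)*(y+4*x+5)*(y+5*x+3)*(y+5*x+4)*(y+5*x+5)*(y+5*x+6)"
  define E0 where "E0 = (y+4*x+2)*(y+4*x+3)*(y+4*x+4)*(y+5*x+2)*(y+5*x+3)*(y+5*x+4)*(y+5*x+5)"
  define f where "f = (y+4*x+5)*(y+5*x+6)"
  define E where "E = D4*D5"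
  have P5: "P5 \<noteq> 0" unfolding P5_def using x by auto
  have E: "E \<noteq> 0" unfolding E_def D4_def D5_def using x y by auto
  have d2: "d2 \<noteq> 0" unfolding d2_def using x y by auto
  have E0: "E0 \<noteq> 0" unfolding E0_def using x y by auto
  have E1: "E1 \<noteq> 0" unfolding E1_def using x y by auto
  have f: "f \<noteq> 0" unfolding f_def using x y by auto
  have eE1: "d2 * E1 = E" unfolding d2_def E1_def E_def D4_def D5_def by (simp add: mult_ac)
  have eE0: "E0 * f = E" unfolding f_def E0_def E_def D4_def D5_def by (simp add: mult_ac)
  have h': "P5 * E - Nl * M = a * m - b * f"
    using h unfolding P5_def E_def D4_def D5_def Nl_def M_def m_def f_def by (simp add: mult_ac)
  have L: "1 - Nl / P5 * (M / (D4 * D5)) = (P5 * E - Nl * M) / (P5 * E)"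
    using P5 E unfolding E_def by (simp add: diff_divide_distrib)
  have R1: "m / d2 * (a / (P5 * E1)) = (a * m) / (P5 * E)"
    using eE1[symmetric] by (simp add: mult_ac)
  have R2: "b / (P5 * E0) = (b * f) / (P5 * E)"
    using eE0[symmetric] f by (simp add: mult_ac)
  have "1 - Nl / P5 * (M / (D4 * D5)) = m / d2 * (a / (P5 * E1)) - b / (P5 * E0)"
    unfolding L R1 R2 h' by (simp add: diff_divide_distrib)
  then show ?thesis
    unfolding P5_def Nl_def M_def D4_def D5_def m_def d2_def E1_def E0_def .
qed


definition P5f :: "real \<Rightarrow> real" where "P5f x = (5*x+1)*(5*x+2)*(5*x+3)*(5*x+4)*(5*x+5)"
definition Lamf :: "real \<Rightarrow> real" where "Lamf x = (((3*x+1)*(3*x+2)*(3*x+3))*((2*x+1)*(2*x+2))*(x+1)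
   *((4*x+1)*(4*x+2)*(4*x+3)*(4*x+4))) / ((5*x+1)*(5*x+2)*(5*x+3)*(5*x+4)*(5*x+5))"
definition Rhof :: "real \<Rightarrow> real \<Rightarrow> real" where "Rhof x y = ((y + x + 1) * ((y + 3*x + 1) * (y + 3*x + 2) * (y + 3*x + 3)))
   / (((y + 4*x + 2) * (y + 4*x + 3) * (y + 4*x + 4) * (y + 4*x + 5))
     * ((y + 5*x + 2) * (y + 5*x + 3) * (y + 5*x + 4) * (y + 5*x + 5) * (y + 5*x + 6)))"
definition Sigf :: "real \<Rightarrow> real \<Rightarrow> real" where
  "Sigf x y = (y + x + 1) * (y + 3*x + 1) / ((y + 4*x + 2) * (y + 5*x + 2))"
definition E0f :: "real \<Rightarrow> real \<Rightarrow> real" where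
  "E0f x y = (y+4*x+2)*(y+4*x+3)*(y+4*x+4)*(y+5*x+2)*(y+5*x+3)*(y+5*x+4)*(y+5*x+5)"
definition E1f :: "real \<Rightarrow> real \<Rightarrow> real" where
  "E1f x y = (y+4*x+3)*(y+4*x+4)*(y+4*x+5)*(y+5*x+3)*(y+5*x+4)*(y+5*x+5)*(y+5*x+6)"

lemma E0f_shift: "E0f x (y+1) = E1f x y"
  unfolding E0f_def E1f_def by (simp add: algebra_simps)

lemma FF_k: "FF n (k+1) = FF n k * Sigf (real n) (real k)"
  unfolding FF_def KK_k Sigf_def by simp

lemma FF_n: "FF (n+1) k = FF n k * (Lamf (real n) * Rhof (real n) (real k))"
  unfolding FF_def KK_n UU_n Lamf_def Rhof_def by (simp add: mult_ac)

lemma GG_form: "GG n k = FF n k * (Qs (real n) (real k) / (P5f (real n) * E0f (real n) (real k)))"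
proof -
  have e1: "fact (5*n+5) = P5f (real n) * (fact (5*n) :: real)"
    using fact_p5[of "5*n"] unfolding P5f_def by (simp add: algebra_simps)
  have e2: "fact (k+4*n+4) = ((real k + 4*real n + 2) * (real k + 4*real n + 3) * (real k + 4*real n + 4)) * (fact (k+4*n+1) :: real)"
    using fact_p3[of "k+4*n+1"] by (simp add: algebra_simps)
  have e3: "fact (k+5*n+5) = ((real k + 5*real n + 2) * (real k + 5*real n + 3) * (real k + 5*real n + 4) * (real k + 5*real n + 5)) * (fact (k+5*n+1) :: real)"
    using fact_p4[of "k+5*n+1"] by (simp add: algebra_simps)
  have e4: "E0f (real n) (real k) = ((real k + 4*real n + 2) * (real k + 4*real n + 3) * (real k + 4*real n + 4)) * ((real k + 5*real n + 2) * (real k + 5*real n + 3) * (real k + 5*real n + 4) * (real k + 5*real n + 5))"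
    unfolding E0f_def by (simp add: mult_ac)
  show ?thesis unfolding GG_def FF_def UU_def KK_def e1 e2 e3 e4
    by (simp add: divide_inverse inverse_mult_distrib mult_ac)
qed

lemma GG_k1: "GG n (k+1) = FF n k * Sigf (real n) (real k) * (Qs (real n) (real k + 1) / (P5f (real n) * E1f (real n) (real k)))"
proof -
  have "GG n (k+1) = FF n (k+1) * (Qs (real n) (real k + 1) / (P5f (real n) * E0f (real n) (real k + 1)))"
  proof -
    have rr: "real (k+1) = real k + 1" by simp
    show ?thesis using GG_form[of n "k+1"] unfolding rr .
  qed
  then show ?thesis unfolding FF_k E0f_shift .
qed

lemma WZ: "FF n k - FF (n+1) k = GG n (k+1) - GG n k"
proof -
  have r: "1 - Lamf (real n) * Rhof (real n) (real k) = Sigf (real n) (real k) * (Qs (real n) (real k + 1) / (P5f (real n) * E1f (real n) (real k)))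
      - Qs (real n) (real k) / (P5f (real n) * E0f (real n) (real k))"
    unfolding Lamf_def Rhof_def Sigf_def P5f_def E1f_def E0f_def
    by (rule wz_rat[OF _ _ poly_id]) auto
  define X where "X = FF n k"
  have "FF n k - FF (n+1) k = X * (1 - Lamf (real n) * Rhof (real n) (real k))"
    unfolding FF_n X_def by (simp add: right_diff_distrib)
  also have "\<dots> = X * Sigf (real n) (real k) * (Qs (real n) (real k + 1) / (P5f (real n) * E1f (real n) (real k)))
      - X * (Qs (real n) (real k) / (P5f (real n) * E0f (real n) (real k)))"
    unfolding r by (simp add: right_diff_distrib mult.assoc)
  finally show ?thesis unfolding GG_k1 GG_form[of n k] X_def .
qed



lemma fact_ratio_pow:
  assumes "k \<le> a" "a + j \<le> b"
  shows "(fact a :: real) / fact b \<le> 1 / (real k + 1)^j"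
proof -
  have "(fact a :: real) * (real k + 1)^j \<le> fact (a + j)"
  proof (induction j)
    case 0 then show ?case by simp
  next
    case (Suc j)
    have "(fact a :: real) * (real k + 1)^Suc j = (fact a * (real k + 1)^j) * (real k + 1)" by (simp add: mult_ac)
    also have "\<dots> \<le> fact (a + j) * (real (a + j) + 1)"
      using Suc.IH assms(1) by (intro mult_mono) auto
    also have "\<dots> = fact (a + Suc j)" by (simp add: mult_ac)
    finally show ?case .
  qed
  also have "(fact (a+j) :: real) \<le> fact b" using assms(2) by (rule fact_mono)
  finally have h: "(fact a :: real) * (real k + 1)^j \<le> fact b" .
  have "0 < (fact b :: real)" by simp
  moreover have "0 < (real k + 1)^j" by simp
  ultimately show ?thesis using h by (simp add: field_simps)
qed

lemma UU_pos: "UU n > 0" unfolding UU_def by simp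
lemma KK_nonneg: "KK n k \<ge> 0" unfolding KK_def by simp
lemma FF_nonneg: "FF n k \<ge> 0" unfolding FF_def
  by (intro mult_nonneg_nonneg less_imp_le[OF UU_pos] KK_nonneg)

lemma KK_bound: "KK n k \<le> 1 / (real k + 1)^2"
proof -
  have "KK n k = (fact (k+n) / fact (k+4*n+1)) * (fact (k+3*n) / fact (k+5*n+1))"
    unfolding KK_def by simp
  also have "\<dots> \<le> (1 / (real k + 1)^1) * (1 / (real k + 1)^1)"
    by (intro mult_mono fact_ratio_pow) auto
  finally show ?thesis by (simp add: power2_eq_square)
qed

lemma inv_sq_summable: "summable (\<lambda>k. 1 / (real k + 1)^2)"
  using sums_summable[OF inverse_squares_sums] by (simp add: add.commute)

lemma FF_summable: "summable (FF n)"
proof (rule summable_comparison_test')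
  show "summable (\<lambda>k. UU n * (1 / (real k + 1)^2))"
    using inv_sq_summable by (rule summable_mult)
  fix k :: nat assume "k \<ge> 0"
  show "norm (FF n k) \<le> UU n * (1 / (real k + 1)^2)"
    using FF_nonneg[of n k] mult_left_mono[OF KK_bound[of n k], of "UU n"] UU_pos[of n]
    unfolding FF_def by simp
qed

lemma term_bound:
  fixes a y :: real
  assumes "y \<ge> 0" "j \<le> 8"
  shows "\<bar>a * y^j\<bar> \<le> \<bar>a\<bar> * (y+1)^8"
proof -
  have "y^j \<le> (y+1)^j" using assms by (intro power_mono) auto
  also have "\<dots> \<le> (y+1)^8" using assms by (intro power_increasing) auto
  finally have "y^j \<le> (y+1)^8" .
  then show ?thesis using assms by (simp add: abs_mult mult_left_mono)
qed

lemma Qs_bound: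
  fixes x y :: real
  assumes y: "y \<ge> 0"
  shows "\<bar>Qs x y\<bar> \<le> (\<bar>q0 x\<bar> + \<bar>q1 x\<bar> + \<bar>q2 x\<bar> + \<bar>q3 x\<bar> + \<bar>q4 x\<bar> + \<bar>q5 x\<bar> + \<bar>q6 x\<bar> + \<bar>q7 x\<bar> + \<bar>q8 x\<bar>) * (y+1)^8"
proof -
  note t = term_bound[OF y]
  have t0: "\<bar>q0 x * y^0\<bar> \<le> \<bar>q0 x\<bar> * (y+1)^8" by (rule t) simp
  have t1: "\<bar>q1 x * y^1\<bar> \<le> \<bar>q1 x\<bar> * (y+1)^8" by (rule t) simp
  have t2: "\<bar>q2 x * y^2\<bar> \<le> \<bar>q2 x\<bar> * (y+1)^8" by (rule t) simp
  have t3: "\<bar>q3 x * y^3\<bar> \<le> \<bar>q3 x\<bar> * (y+1)^8" by (rule t) simp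
  have t4: "\<bar>q4 x * y^4\<bar> \<le> \<bar>q4 x\<bar> * (y+1)^8" by (rule t) simp
  have t5: "\<bar>q5 x * y^5\<bar> \<le> \<bar>q5 x\<bar> * (y+1)^8" by (rule t) simp
  have t6: "\<bar>q6 x * y^6\<bar> \<le> \<bar>q6 x\<bar> * (y+1)^8" by (rule t) simp
  have t7: "\<bar>q7 x * y^7\<bar> \<le> \<bar>q7 x\<bar> * (y+1)^8" by (rule t) simp
  have t8: "\<bar>q8 x * y^8\<bar> \<le> \<bar>q8 x\<bar> * (y+1)^8" by (rule t) simp
  have d: "(\<bar>q0 x\<bar> + \<bar>q1 x\<bar> + \<bar>q2 x\<bar> + \<bar>q3 x\<bar> + \<bar>q4 x\<bar> + \<bar>q5 x\<bar> + \<bar>q6 x\<bar> + \<bar>q7 x\<bar> + \<bar>q8 x\<bar>) * (y+1)^8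
    = \<bar>q0 x\<bar> * (y+1)^8 + \<bar>q1 x\<bar> * (y+1)^8 + \<bar>q2 x\<bar> * (y+1)^8 + \<bar>q3 x\<bar> * (y+1)^8 + \<bar>q4 x\<bar> * (y+1)^8
      + \<bar>q5 x\<bar> * (y+1)^8 + \<bar>q6 x\<bar> * (y+1)^8 + \<bar>q7 x\<bar> * (y+1)^8 + \<bar>q8 x\<bar> * (y+1)^8"
    by (simp add: distrib_right)
  show ?thesis unfolding d Qs_def abs_le_iff
    using t0 t1 t2 t3 t4 t5 t6 t7 t8 unfolding abs_le_iff by linarith
qed

lemma pw8: "(a::real) \<noteq> 0 \<Longrightarrow> a^8 * ((1 / a^4) * (1 / a^5)) = inverse a"
  by (simp add: field_simps eval_nat_numeral)

lemma GG_lim: "(\<lambda>k. GG n k) \<longlonglongrightarrow> 0"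
proof -
  define x where "x = real n"
  define c where "c = 18 * fact (3*n) * fact (2*n) * fact n * fact (4*n) / (fact (5*n+5) :: real)"
  define Mq where "Mq = \<bar>q0 x\<bar> + \<bar>q1 x\<bar> + \<bar>q2 x\<bar> + \<bar>q3 x\<bar> + \<bar>q4 x\<bar> + \<bar>q5 x\<bar> + \<bar>q6 x\<bar> + \<bar>q7 x\<bar> + \<bar>q8 x\<bar>"
  have c0: "c \<ge> 0" unfolding c_def by simp
  have M0: "Mq \<ge> 0" unfolding Mq_def by simp
  have bnd: "norm (GG n k) \<le> (c * Mq) * inverse (real (Suc k))" for k
  proof -
    define K2 where "K2 = (fact (k+n) * fact (k+3*n) / (fact (k+4*n+4) * fact (k+5*n+5)) :: real)"
    have K2eq: "K2 = (fact (k+n) / fact (k+4*n+4)) * (fact (k+3*n) / fact (k+5*n+5))"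
      unfolding K2_def by simp
    have K2b: "K2 \<le> (1 / (real k + 1)^4) * (1 / (real k + 1)^5)"
      unfolding K2eq by (intro mult_mono fact_ratio_pow) auto
    have K20: "K2 \<ge> 0" unfolding K2_def by simp
    have G: "GG n k = c * Qs x (real k) * K2" unfolding GG_def c_def K2_def x_def by simp
    have "norm (GG n k) = c * \<bar>Qs x (real k)\<bar> * K2" unfolding G using c0 K20 by (simp add: abs_mult)
    also have "\<dots> \<le> c * (Mq * (real k + 1)^8) * ((1 / (real k + 1)^4) * (1 / (real k + 1)^5))"
      using Qs_bound[of "real k" x] c0 K20 K2b M0 unfolding Mq_def[symmetric]
      by (intro mult_mono mult_left_mono) auto
    also have "\<dots> = (c * Mq) * ((real k + 1)^8 * ((1 / (real k + 1)^4) * (1 / (real k + 1)^5)))"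
      by (simp add: mult_ac)
    also have "(real k + 1)^8 * ((1 / (real k + 1)^4) * (1 / (real k + 1)^5)) = inverse (real (Suc k))"
      using pw8[of "real k + 1"] by simp
    finally show ?thesis .
  qed
  show ?thesis
    by (rule Lim_null_comparison[OF always_eventually[OF allI[OF bnd]]])
       (rule tendsto_mult_right_zero[OF LIMSEQ_inverse_real_of_nat])
qed


lemma Sig_le:
  fixes x y :: real
  assumes x: "x \<ge> 0" and y: "y \<ge> 0"
  shows "Sigf x y \<le> (y+x+1)/(y+x+3)"
proof -
  have xy: "0 \<le> x*y" using x y by simp
  have xx: "0 \<le> x*x" using x by simp
  have core: "(y+3*x+1)*(y+x+3) \<le> (y+4*x+2)*(y+5*x+2)"
    using xy xx x y by (simp add: algebra_simps)
  have a: "0 \<le> y+x+1" using x y by simp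
  have "(y+x+1)*((y+3*x+1)*(y+x+3)) \<le> (y+x+1)*((y+4*x+2)*(y+5*x+2))"
    using mult_left_mono[OF core a] .
  moreover have "0 < (y+4*x+2)*(y+5*x+2)" using x y by simp
  moreover have "0 < y+x+3" using x y by simp
  ultimately show ?thesis unfolding Sigf_def
    by (simp add: divide_le_eq le_divide_eq mult_ac)
qed

lemma canc: "(b::real) \<noteq> 0 \<Longrightarrow> (a/(b*c))*(b/d) = a/(c*d)"
  by (simp add: field_simps)

definition phi :: "real \<Rightarrow> real \<Rightarrow> real" where
  "phi x y = (x+1)*(x+2)/((y+x+1)*(y+x+2))"

lemma phi_step:
  fixes x y :: real
  assumes x: "x \<ge> 0" and y: "y \<ge> 0"
  shows "phi x y * ((y+x+1)/(y+x+3)) = phi x (y+1)"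
proof -
  have nz: "y+x+1 \<noteq> 0" using x y by auto
  have e: "phi x (y+1) = (x+1)*(x+2)/((y+x+2)*(y+x+3))" unfolding phi_def
    by (rule arg_cong[where f = "\<lambda>t. (x+1)*(x+2)/t"]) (simp add: algebra_simps)
  have c: "((x+1)*(x+2)/((y+x+1)*((y+x+2)))) * ((y+x+1)/(y+x+3)) = (x+1)*(x+2)/((y+x+2)*(y+x+3))"
    using canc[OF nz] .
  show ?thesis unfolding e using c unfolding phi_def .
qed

lemma KK_decay: "KK N k \<le> KK N 0 * phi (real N) (real k)"
proof (induction k)
  case 0
  then show ?case unfolding phi_def by simp
next
  case (Suc k)
  have s0: "0 \<le> Sigf (real N) (real k)" unfolding Sigf_def by simp
  have "KK N (Suc k) = KK N k * Sigf (real N) (real k)" using KK_k[of N k] by (simp add: Sigf_def)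
  also have "\<dots> \<le> (KK N 0 * phi (real N) (real k)) * Sigf (real N) (real k)"
    using Suc.IH s0 by (rule mult_right_mono)
  also have "\<dots> \<le> (KK N 0 * phi (real N) (real k)) * ((real k + real N + 1)/(real k + real N + 3))"
    using Sig_le[of "real N" "real k"] KK_nonneg[of N 0]
    by (intro mult_left_mono mult_nonneg_nonneg) (auto simp: phi_def)
  also have "\<dots> = KK N 0 * phi (real N) (real k + 1)"
    using phi_step[of "real N" "real k"] by (simp only: mult.assoc)
  finally have "KK N (Suc k) \<le> KK N 0 * phi (real N) (real k + 1)" .
  then show ?case by (simp add: add.commute)
qed

lemma phi_le: "phi (real N) (real k) \<le> (real N + 1)*(real N + 2) * (1 / (real k + 1)^2)"
proof -
  have "(real k + 1)^2 \<le> (real k + real N + 1)*(real k + real N + 2)"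
    unfolding power2_eq_square by (intro mult_mono) auto
  moreover have "0 < (real k + 1)^2" by simp
  ultimately have "(real N + 1)*(real N + 2) / ((real k + real N + 1)*(real k + real N + 2))
     \<le> (real N + 1)*(real N + 2) / (real k + 1)^2"
    by (intro divide_left_mono) auto
  then show ?thesis unfolding phi_def by simp
qed

definition BB :: "nat \<Rightarrow> real" where
  "BB N = UU N * KK N 0 * ((real N + 1)*(real N + 2))"

lemma BB_nonneg: "BB N \<ge> 0"
  unfolding BB_def using UU_pos[of N] KK_nonneg[of N 0] by simp

lemma FF_decay: "FF N k \<le> BB N * (1 / (real k + 1)^2)"
proof -
  have "FF N k \<le> UU N * (KK N 0 * phi (real N) (real k))"
    unfolding FF_def using UU_pos[of N] KK_decay[of N k] by (simp add: mult_left_mono)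
  also have "\<dots> \<le> UU N * (KK N 0 * ((real N + 1)*(real N + 2) * (1 / (real k + 1)^2)))"
    using UU_pos[of N] KK_nonneg[of N 0] phi_le[of N k]
    by (intro mult_left_mono mult_nonneg_nonneg) auto
  also have "\<dots> = BB N * (1 / (real k + 1)^2)" unfolding BB_def by (simp add: mult_ac)
  finally show ?thesis .
qed

lemma inv_sq_sums: "(\<lambda>k. 1 / (real k + 1)^2) sums (pi^2/6)"
  using inverse_squares_sums by (simp add: add.commute)

lemma S_bound: "suminf (FF N) \<le> BB N * (pi^2/6)"
proof -
  have "(\<lambda>k. BB N * (1 / (real k + 1)^2)) sums (BB N * (pi^2/6))"
    by (rule sums_mult[OF inv_sq_sums])
  then show ?thesis
    using suminf_le[OF FF_decay FF_summable sums_summable] sums_unique by metis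
qed

lemma ratio_ineq:
  fixes x :: real
  assumes x: "x \<ge> 0"
  shows "Lamf x * Rhof x 0 * ((x+2)*(x+3)) \<le> (x+1)*(x+2)/2"
proof -
  define Nl where "Nl = ((3*x+1)*(3*x+2)*(3*x+3))*((2*x+1)*(2*x+2))*(x+1)*((4*x+1)*(4*x+2)*(4*x+3)*(4*x+4))"
  define P5 where "P5 = (5*x+1)*(5*x+2)*(5*x+3)*(5*x+4)*(5*x+5)"
  define M0 where "M0 = (x + 1) * ((3*x + 1) * (3*x + 2) * (3*x + 3))"
  define D where "D = ((4*x + 2) * (4*x + 3) * (4*x + 4) * (4*x + 5))
     * ((5*x + 2) * (5*x + 3) * (5*x + 4) * (5*x + 5) * (5*x + 6))"
  have al: "(4*x+1)*(4*x+2)*(4*x+3)*(4*x+4)*(3*x+1)*(3*x+2)*(3*x+3)*(3*x+1)*(3*x+2)*(3*x+3)*(2*x+1)*(2*x+2)*(x+1)*(2*x+2)*(x+3)*(x+2)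
     \<le> (4*x+2)*(4*x+3)*(4*x+4)*(4*x+5)*(5*x+1)*(5*x+2)*(5*x+3)*(5*x+2)*(5*x+3)*(5*x+4)*(5*x+4)*(5*x+5)*(x+1)*(5*x+5)*(5*x+6)*(x+2)"
    by (intro mult_mono mult_nonneg_nonneg) (use x in auto)
  have eL: "2 * (Nl * M0 * ((x+2)*(x+3))) = (4*x+1)*(4*x+2)*(4*x+3)*(4*x+4)*(3*x+1)*(3*x+2)*(3*x+3)*(3*x+1)*(3*x+2)*(3*x+3)*(2*x+1)*(2*x+2)*(x+1)*(2*x+2)*(x+3)*(x+2)"
    unfolding Nl_def M0_def by algebra
  have eR: "(P5 * D) * ((x+1)*(x+2)) = (4*x+2)*(4*x+3)*(4*x+4)*(4*x+5)*(5*x+1)*(5*x+2)*(5*x+3)*(5*x+2)*(5*x+3)*(5*x+4)*(5*x+4)*(5*x+5)*(x+1)*(5*x+5)*(5*x+6)*(x+2)"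
    unfolding P5_def D_def by algebra
  have key: "2 * (Nl * M0 * ((x+2)*(x+3))) \<le> (P5 * D) * ((x+1)*(x+2))"
    unfolding eL eR by (rule al)
  have L: "Lamf x * Rhof x 0 * ((x+2)*(x+3)) = (Nl * M0 * ((x+2)*(x+3))) / (P5 * D)"
    unfolding Lamf_def Rhof_def Nl_def M0_def P5_def D_def by simp
  have P: "0 < P5 * D" unfolding P5_def D_def using x by simp
  show ?thesis unfolding L using key P by (simp add: pos_divide_le_eq field_simps)
qed


lemma BB_step: "BB (N+1) \<le> BB N / 2"
proof -
  define x where "x = real N"
  have x: "x \<ge> 0" unfolding x_def by simp
  have "BB (N+1) = (UU N * KK N 0) * (Lamf x * Rhof x 0 * ((x+2)*(x+3)))"
    unfolding BB_def UU_n[of N, folded Lamf_def[of "real N"]] KK_n[of N 0, folded Rhof_def[of "real N" "real 0"]] x_def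
    by (simp add: mult_ac add_ac)
  also have "\<dots> \<le> (UU N * KK N 0) * ((x+1)*(x+2)/2)"
    using ratio_ineq[OF x] UU_pos[of N] KK_nonneg[of N 0] by (intro mult_left_mono) auto
  also have "\<dots> = BB N / 2" unfolding BB_def x_def by simp
  finally show ?thesis .
qed

lemma BB_geom: "BB N \<le> BB 0 * (1/2)^N"
proof (induction N)
  case 0 then show ?case by simp
next
  case (Suc N)
  have "BB (Suc N) \<le> BB N / 2" using BB_step[of N] by simp
  also have "\<dots> \<le> BB 0 * (1/2)^N / 2" using Suc.IH by simp
  finally show ?case by simp
qed

lemma S_lim: "(\<lambda>N. suminf (FF N)) \<longlonglongrightarrow> 0"
proof (rule Lim_null_comparison)
  show "\<forall>\<^sub>F N in sequentially. norm (suminf (FF N)) \<le> BB 0 * (1/2)^N * (pi^2/6)"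
  proof (rule always_eventually, rule allI)
    fix N
    have a: "0 \<le> suminf (FF N)" using FF_nonneg FF_summable by (simp add: suminf_nonneg)
    have b: "suminf (FF N) \<le> BB N * (pi^2/6)" by (rule S_bound)
    have c: "BB N * (pi^2/6) \<le> BB 0 * (1/2)^N * (pi^2/6)"
      using BB_geom[of N] by (intro mult_right_mono) auto
    from a have "norm (suminf (FF N)) = suminf (FF N)" by simp
    with b c show "norm (suminf (FF N)) \<le> BB 0 * (1/2)^N * (pi^2/6)" by linarith
  qed
  have "(\<lambda>N. (1/2::real)^N) \<longlonglongrightarrow> 0" by (rule LIMSEQ_power_zero) simp
  then have "(\<lambda>N. BB 0 * (1/2::real)^N) \<longlonglongrightarrow> 0" by (rule tendsto_mult_right_zero)
  then show "(\<lambda>N. BB 0 * (1/2)^N * (pi^2/6)) \<longlonglongrightarrow> 0" by (rule tendsto_mult_left_zero)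
qed

lemma ffcanc: "(f::real) \<noteq> 0 \<Longrightarrow> f*f/((a*f)*(a*f)) = 1/a^2"
  by (simp add: power2_eq_square)

lemma S0: "(FF 0) sums (3 * pi^2)"
proof -
  have "FF 0 k = 18 * (1 / (real k + 1)^2)" for k
  proof -
    have "KK 0 k = fact k * fact k / (((real k + 1) * fact k) * ((real k + 1) * fact k))"
      unfolding KK_def using fact_p1[of k] by (simp add: add.commute)
    also have "\<dots> = 1 / (real k + 1)^2" by (rule ffcanc) simp
    finally show ?thesis unfolding FF_def UU_def by simp
  qed
  then have e: "FF 0 = (\<lambda>k. 18 * (1 / (real k + 1)^2))" by auto
  show ?thesis unfolding e using sums_mult[OF inv_sq_sums, of 18] by simp
qed

lemma alg:
  fixes p u b1 b2 c1 a4 F1 F2 F3 F4 F5 P5 :: real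
  assumes "u > 0" "b1 > 0" "b2 > 0" "c1 > 0" "a4 > 0" "F1 > 0" "F2 > 0" "F3 > 0" "F4 > 0" "F5 > 0" "P5 > 0"
  shows "- (18 * F3 * F2 * F1 * F4 / (P5 * F5) * (- (p * u^2 * a4))
     * (F1 * F3 / ((a4 * F4) * (P5 * F5))))
   = p / (u^3 * b1^2 * b2^2 * c1
      * ((P5 * F5) / ((b1*b2*(3*u) * F3) * (c1*(2*u) * F2)))^2
      * ((c1*(2*u) * F2) / ((u * F1) * (u * F1))))"
  using assms by (simp add: field_simps power2_eq_square eval_nat_numeral)

lemma term_id: "- GG n 0 = term15 (n+1)"
proof -
  define x where "x = real n"
  have x0: "x \<ge> 0" unfolding x_def by simp
  have c1: "real ((5*(n+1)) choose (3*(n+1))) = fact (5*(n+1)) / (fact (3*(n+1)) * fact (2*(n+1)))"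
  proof -
    have "3*(n+1) \<le> 5*(n+1)" by simp
    from binomial_fact[OF this] have "real ((5*(n+1)) choose (3*(n+1))) = fact (5*(n+1)) / (fact (3*(n+1)) * fact (5*(n+1) - 3*(n+1)))" .
    moreover have "5*(n+1) - 3*(n+1) = 2*(n+1)" by simp
    ultimately show ?thesis by simp
  qed
  have c2: "real ((2*(n+1)) choose (n+1)) = fact (2*(n+1)) / (fact (n+1) * fact (n+1))"
  proof -
    have "n+1 \<le> 2*(n+1)" by simp
    from binomial_fact[OF this] have "real ((2*(n+1)) choose (n+1)) = fact (2*(n+1)) / (fact (n+1) * fact (2*(n+1) - (n+1)))" .
    moreover have "2*(n+1) - (n+1) = n+1" by simp
    ultimately show ?thesis by simp
  qed
  have e1: "fact (3*(n+1)) = (3*x+1)*(3*x+2)*(3*(x+1)) * (fact (3*n) :: real)"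
    using fact_p3[of "3*n"] unfolding x_def by (simp add: algebra_simps)
  have e2: "fact (2*(n+1)) = (2*x+1)*(2*(x+1)) * (fact (2*n) :: real)"
    using fact_p2[of "2*n"] unfolding x_def by (simp add: algebra_simps)
  have e3: "fact (n+1) = (x+1) * (fact n :: real)"
    using fact_p1[of "n"] unfolding x_def by (simp add: algebra_simps)
  have e5: "fact (5*(n+1)) = P5f x * (fact (5*n) :: real)"
    using fact_p5[of "5*n"] unfolding x_def P5f_def by (simp add: algebra_simps)
  have e5': "fact (5*n+5) = P5f x * (fact (5*n) :: real)"
    using e5 by (simp add: algebra_simps)
  have e4: "fact (4*n+4) = ((4*x+1)*(4*x+2)*(4*x+3)*(4*x+4)) * (fact (4*n) :: real)"
    using fact_p4[of "4*n"] unfolding x_def by (simp add: algebra_simps)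
  have q: "Qs x 0 = - (p15 (x+1) * (x+1)^2 * ((4*x+1)*(4*x+2)*(4*x+3)*(4*x+4)))"
    using poly_id2[of x] by (simp add: mult_ac)
  have G: "GG n 0 = 18 * fact (3*n) * fact (2*n) * fact n * fact (4*n) / (P5f x * fact (5*n)) * Qs x 0
     * (fact n * fact (3*n) / ((((4*x+1)*(4*x+2)*(4*x+3)*(4*x+4)) * fact (4*n)) * (P5f x * fact (5*n))))"
  proof -
    have G0: "GG n 0 = 18 * fact (3*n) * fact (2*n) * fact n * fact (4*n) / fact (5*n+5) * Qs x 0
     * (fact n * fact (3*n) / (fact (4*n+4) * fact (5*n+5)))"
      unfolding GG_def x_def by simp
    show ?thesis unfolding G0 e5' e4 ..
  qed
  have T: "term15 (n+1) = p15 (x+1) / ((x+1)^3 * (3*x+1)^2 * (3*x+2)^2 * (2*x+1)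
      * ((P5f x * fact (5*n)) / (((3*x+1)*(3*x+2)*(3*(x+1)) * fact (3*n)) * ((2*x+1)*(2*(x+1)) * fact (2*n))))^2
      * (((2*x+1)*(2*(x+1)) * fact (2*n)) / (((x+1) * fact n) * ((x+1) * fact n))))"
  proof -
    have a1: "3 * (x+1) - 2 = 3*x+1" "3 * (x+1) - 1 = 3*x+2" "2 * (x+1) - 1 = 2*x+1"
      "real (n+1) = x+1" unfolding x_def by simp_all
    show ?thesis unfolding term15_def c1 c2 e1 e2 e3 e5 a1 ..
  qed
  have P: "P5f x > 0" unfolding P5f_def using x0 by simp
  show ?thesis unfolding G T q
    by (rule alg) (use x0 P in auto)
qed

theorem mainTheorem15:
  shows "(\<lambda>n. term15 (n + 1)) sums (3 * pi^2)"
proof -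
  define S where "S n = suminf (FF n)" for n
  have step: "S n - S (n+1) = term15 (n+1)" for n
  proof -
    have a: "(\<lambda>k. FF n k - FF (n+1) k) sums (S n - S (n+1))"
      unfolding S_def by (intro sums_diff summable_sums FF_summable)
    have "(\<lambda>k. GG n (Suc k) - GG n k) sums (0 - GG n 0)"
      by (rule telescope_sums[OF GG_lim])
    then have b: "(\<lambda>k. FF n k - FF (n+1) k) sums (- GG n 0)"
      using WZ[of n] by simp
    from sums_unique2[OF a b] show ?thesis using term_id[of n] by simp
  qed
  have ps: "(\<Sum>n<N. term15 (n+1)) = S 0 - S N" for N
    unfolding step[symmetric] using sum_lessThan_telescope'[of S N] by simp
  have S0v: "S 0 = 3 * pi^2" unfolding S_def using S0 by (simp add: sums_iff)
  have "(\<lambda>N. S 0 - S N) \<longlonglongrightarrow> S 0 - 0"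
    using S_lim unfolding S_def[symmetric] by (intro tendsto_diff tendsto_const)
  then show ?thesis unfolding sums_def ps S0v by simp
qed

end
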